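(* Consider the setting described in the context, for a connected undirected graph $G=(V,E)$ with $N$ nodes, and assume $D>2$. For $t\ge 1$ define $\mathcal{I}_0(t)=\bigcup_{m=0}^{t-1}\mathcal{F}_0(m)$, $\mathcal{I}_1(t)=\Big(\bigcup_{m=0}^{t-1}\mathcal{F}_{D-1}(m)\Big)\setminus \mathcal{I}_0(t)$, $\mathcal{I}_2(t)=V\setminus(\mathcal{I}_0(t)\cup\mathcal{I}_1(t))$. Then for every $t\ge 1$: $a_i(t)\le 2N$ for all $i\in\mathcal{I}_0(t)$; $a_i(t)=1$ for all $i\in\mathcal{I}_1(t)$; and $a_i(t)\le N$ for all $i\in\mathcal{I}_2(t)$.
   Context: $G=(V,E)$ is a finite connected undirected graph with node set $V=\{0,\dots,N-1\}$; $\mathcal{N}(i)$ denotes the set of neighbours of $i$. Every edge has length $1$, $d_{ij}$ is the hop distance between $i$ and $j$, and $\mathcal{F}_k(m)=\{i\in V : d_{ik}=m\}$. Every node carries value $v_i=1$. The source set is $S(t)=\{D-1\}$ for $t\le 0$ and $S(t)=\{0\}$ for $t\ge 1$. The integer $D$ is the effective diameter of $G$ with respect to source $0$, i.e. $\max_{i\in V} d_{i0}=D-1$, and nodes are labelled so that $0,1,\dots,D-1$ is a path in which node $i$ is a neighbour of $i+1$ with $d_{0,i+1}=d_{0,i}+1$ (so $d_{0,i}=i$ for $0\le i\le D-1$). The algorithm (Adaptive Bellman–Ford with collection and monotonic filtering) updates, for $t\ge1$: $\hat d_i(t)=0$ if $i\in S(t)$, and $\hat d_i(t)=\min_{j\in\mathcal{N}(i)}\{\hat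 d_j(t-1)+1\}$ otherwise; $c_i(t)=i$ if $i\in S(t)$, and otherwise $c_i(t)$ is a minimizer $j\in\mathcal{N}(i)$ of $\hat d_j(t-1)+1$; $C_i(t)=\{j : c_j(t-1)=i \text{ and } \hat d_j(t-1)=\hat d_i(t)+1\}$; $a_i(t)=\sum_{j\in C_i(t)}a_j(t-1)+v_i$. Initial values at $t=0$: $(\hat d_i(0),c_i(0),a_i(0))_{i\in V}$ are steady-state (fixed-point) values of these recursions when the source set is constantly $\{D-1\}$; in particular $\hat d_i(0)=m$ for all $i\in\mathcal{F}_{D-1}(m)$, and for every integer $m$, $\sum_{i\in\mathcal{F}_{D-1}(m)}a_i(0)\le N$. *)

theory Defs
  imports Main
begin

text \<open>Graph: node set {0..<N}, adjacency predicate E (symmetric, irreflexive,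
  only between nodes of V). Every edge has length 1.\<close>

definition nbrs :: "(nat \<Rightarrow> nat \<Rightarrow> bool) \<Rightarrow> nat \<Rightarrow> nat \<Rightarrow> nat set" where
  "nbrs E N i = {j. j < N \<and> E i j}"

definition hopdist :: "(nat \<Rightarrow> nat \<Rightarrow> bool) \<Rightarrow> nat \<Rightarrow> nat \<Rightarrow> nat" where
  "hopdist E i j = (LEAST n. (E ^^ n) i j)"

definition level :: "(nat \<Rightarrow> nat \<Rightarrow> bool) \<Rightarrow> nat \<Rightarrow> nat \<Rightarrow> nat \<Rightarrow> nat set" where
  "level E N k m = {i. i < N \<and> hopdist E i k = m}"

definition src :: "nat \<Rightarrow> nat \<Rightarrow> nat set" where
  "src D t = (if t = 0 then {D - 1} else {0})"

definition Cset :: "nat \<Rightarrow> (nat \<Rightarrow> nat \<Rightarrow> nat) \<Rightarrow> (nat \<Rightarrow> nat \<Rightarrow> nat) \<Rightarrow> nat \<Rightarrow> nat \<Rightarrow> nat set" where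
  "Cset N dhat c t i = {j. j < N \<and> c t j = i \<and> dhat t j = dhat (Suc t) i + 1}"

definition I0 :: "(nat \<Rightarrow> nat \<Rightarrow> bool) \<Rightarrow> nat \<Rightarrow> nat \<Rightarrow> nat set" where
  "I0 E N t = (\<Union>m\<in>{0..t-1}. level E N 0 m)"

definition I1 :: "(nat \<Rightarrow> nat \<Rightarrow> bool) \<Rightarrow> nat \<Rightarrow> nat \<Rightarrow> nat \<Rightarrow> nat set" where
  "I1 E N D t = (\<Union>m\<in>{0..t-1}. level E N (D - 1) m) - I0 E N t"

definition I2 :: "(nat \<Rightarrow> nat \<Rightarrow> bool) \<Rightarrow> nat \<Rightarrow> nat \<Rightarrow> nat \<Rightarrow> nat set" where
  "I2 E N D t = {0..<N} - (I0 E N t \<union> I1 E N D t)"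

end

theory Submission imports Defs begin
lemma hd_path: assumes "(E ^^ n) i x" shows "(E ^^ hopdist E i x) i x" "hopdist E i x \<le> n"
  using assms unfolding hopdist_def by (auto intro: LeastI Least_le)

lemma hd_self: "hopdist E x x = 0"
  unfolding hopdist_def using relpowp_0_I[of E x] by (auto intro: Least_le)

lemma hd_zero: assumes "hopdist E i x = 0" "(E ^^ n) i x" shows "i = x"
  using hd_path(1)[OF assms(2)] assms(1) by (auto elim: relpowp_0_E)

lemma hd_nbr: assumes "E j i" "(E ^^ n) i x" shows "hopdist E j x \<le> hopdist E i x + 1"
proof -
  have "(E ^^ Suc (hopdist E i x)) j x" using relpowp_Suc_I2[OF assms(1) hd_path(1)[OF assms(2)]] .
  from hd_path(2)[OF this] show ?thesis by simp
qed

lemma hd_down: assumes "hopdist E i x > 0" "(E ^^ n) i x"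
  shows "\<exists>j. E i j \<and> hopdist E j x + 1 \<le> hopdist E i x"
proof -
  obtain m where m: "hopdist E i x = Suc m" using assms(1) by (cases "hopdist E i x") auto
  have "(E ^^ Suc m) i x" using hd_path(1)[OF assms(2)] m by simp
  then obtain y where "E i y" "(E ^^ m) y x" using relpowp_Suc_D2 by metis
  thus ?thesis using hd_path(2)[OF \<open>(E ^^ m) y x\<close>] m by auto
qed

lemma Min_geI: "finite A \<Longrightarrow> A \<noteq> {} \<Longrightarrow> (\<And>j. j \<in> A \<Longrightarrow> L \<le> f j) \<Longrightarrow> L \<le> Min (f ` A)"
  by (simp add: Min_ge_iff)

lemma Min_leI: assumes "finite A" "j \<in> A" "f j \<le> (U::nat)" shows "Min (f ` A) \<le> U"
proof -
  have "Min (f ` A) \<le> f j" using assms by (intro Min_le) auto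
  with assms(3) show ?thesis by linarith
qed

lemma sum_children:
  fixes g :: "nat \<Rightarrow> nat"
  assumes "finite S" "finite U" "\<And>i. i \<in> S \<Longrightarrow> C i \<subseteq> U" "\<And>i j. i \<in> S \<Longrightarrow> j \<in> C i \<Longrightarrow> f j = i"
  shows "(\<Sum>i\<in>S. \<Sum>j\<in>C i. g j) \<le> (\<Sum>j\<in>U. g j)"
proof -
  have fin: "\<And>i. i \<in> S \<Longrightarrow> finite (C i)" using assms(2,3) finite_subset by blast
  have "(\<Sum>i\<in>S. \<Sum>j\<in>C i. g j) = sum g (\<Union>(C ` S))"
    by (rule sum.UNION_disjoint[symmetric]) (use assms(1) fin in simp, use fin in simp, metis assms(4) disjoint_iff)
  also have "\<dots> \<le> sum g U" by (rule sum_mono2) (use assms in auto)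
  finally show ?thesis .
qed
theorem theorem2:
  fixes E :: "nat \<Rightarrow> nat \<Rightarrow> bool" and N D :: nat
    and dhat c a :: "nat \<Rightarrow> nat \<Rightarrow> nat"
  assumes E_in_V: "\<And>i j. E i j \<Longrightarrow> i < N \<and> j < N"
    and E_sym: "\<And>i j. E i j \<Longrightarrow> E j i"
    and E_irrefl: "\<And>i. \<not> E i i"
    and connected: "\<And>i j. i < N \<Longrightarrow> j < N \<Longrightarrow> \<exists>n. (E ^^ n) i j"
    and D_gt: "D > 2"
    and D_le: "D \<le> N"
    and ecc: "\<And>i. i < N \<Longrightarrow> hopdist E i 0 \<le> D - 1"
    and path: "\<And>i. i + 1 < D \<Longrightarrow> E i (i + 1)"
    and path_dist: "\<And>i. i < D \<Longrightarrow> hopdist E 0 i = i"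
    (* initial values: a fixed point of the recursions with source set constantly {D-1} *)
    and fp_d: "\<And>i. i < N \<Longrightarrow> dhat 0 i =
        (if i \<in> src D 0 then 0 else Min ((\<lambda>j. dhat 0 j + 1) ` nbrs E N i))"
    and fp_c: "\<And>i. i < N \<Longrightarrow>
        (if i \<in> src D 0 then c 0 i = i
         else c 0 i \<in> nbrs E N i \<and> dhat 0 (c 0 i) + 1 = Min ((\<lambda>j. dhat 0 j + 1) ` nbrs E N i))"
    and fp_a: "\<And>i. i < N \<Longrightarrow>
        a 0 i = (\<Sum>j\<in>{j. j < N \<and> c 0 j = i \<and> dhat 0 j = dhat 0 i + 1}. a 0 j) + 1"
    and init_d: "\<And>m i. i \<in> level E N (D - 1) m \<Longrightarrow> dhat 0 i = m"
    and init_a: "\<And>m. (\<Sum>i\<in>level E N (D - 1) m. a 0 i) \<le> N"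
    (* updates for t \<ge> 1 (time Suc t computed from time t) *)
    and upd_d: "\<And>t i. i < N \<Longrightarrow> dhat (Suc t) i =
        (if i \<in> src D (Suc t) then 0 else Min ((\<lambda>j. dhat t j + 1) ` nbrs E N i))"
    and upd_c: "\<And>t i. i < N \<Longrightarrow>
        (if i \<in> src D (Suc t) then c (Suc t) i = i
         else c (Suc t) i \<in> nbrs E N i \<and> dhat t (c (Suc t) i) + 1 = Min ((\<lambda>j. dhat t j + 1) ` nbrs E N i))"
    and upd_a: "\<And>t i. i < N \<Longrightarrow>
        a (Suc t) i = (\<Sum>j\<in>Cset N dhat c t i. a t j) + 1"
  shows "\<forall>t\<ge>1. (\<forall>i\<in>I0 E N t. a t i \<le> 2 * N)
              \<and> (\<forall>i\<in>I1 E N D t. a t i = 1)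
              \<and> (\<forall>i\<in>I2 E N D t. a t i \<le> N)"
proof -
  define d0 where "d0 i = hopdist E i 0" for i
  define dD where "dD i = hopdist E i (D - 1)" for i
  have N0: "0 < N" and ND: "D - 1 < N" using D_gt D_le by auto
  have r0: "\<exists>n. (E ^^ n) i 0" if "i < N" for i using connected[OF that N0] .
  have rD: "\<exists>n. (E ^^ n) i (D - 1)" if "i < N" for i using connected[OF that ND] .
  have nb0: "d0 j \<le> d0 i + 1" if "E i j" for i j
  proof -
    have "i < N" using E_in_V[OF that] by simp
    then obtain n where "(E ^^ n) i 0" using r0 by blast
    thus ?thesis unfolding d0_def using hd_nbr[of E, OF E_sym[OF that]] by blast
  qed
  have nbD: "dD j \<le> dD i + 1" if "E i j" for i j
  proof -
    have "i < N" using E_in_V[OF that] by simp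
    then obtain n where "(E ^^ n) i (D - 1)" using rD by blast
    thus ?thesis unfolding dD_def using hd_nbr[of E, OF E_sym[OF that]] by blast
  qed
  have dn0: "\<exists>j. E i j \<and> d0 j + 1 = d0 i" if ii: "i < N" and pp: "d0 i > 0" for i
  proof -
    obtain n where "(E ^^ n) i 0" using r0[OF ii] by blast
    from hd_down[OF _ this] pp obtain j where "E i j" "d0 j + 1 \<le> d0 i" unfolding d0_def by blast
    with nb0[OF E_sym[OF this(1)]] show ?thesis by (intro exI[of _ j]) auto
  qed
  have dnD: "\<exists>j. E i j \<and> dD j + 1 = dD i" if ii: "i < N" and pp: "dD i > 0" for i
  proof -
    obtain n where "(E ^^ n) i (D - 1)" using rD[OF ii] by blast
    from hd_down[OF _ this] pp obtain j where "E i j" "dD j + 1 \<le> dD i" unfolding dD_def by blast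
    with nbD[OF E_sym[OF this(1)]] show ?thesis by (intro exI[of _ j]) auto
  qed
  have z0: "i = 0" if "i < N" "d0 i = 0" for i
    using r0[OF that(1)] hd_zero that(2) unfolding d0_def by blast
  have zD: "i = D - 1" if "i < N" "dD i = 0" for i
    using rD[OF that(1)] hd_zero that(2) unfolding dD_def by blast
  have d00: "d0 0 = 0" unfolding d0_def by (rule hd_self)
  have dDD: "dD (D - 1) = 0" unfolding dD_def by (rule hd_self)
  have finN: "finite (nbrs E N i)" for i unfolding nbrs_def by simp
  have nbrsI: "j \<in> nbrs E N i" if "E i j" for i j unfolding nbrs_def using E_in_V[OF that] that by simp
  have nbrsD: "E i j" "j < N" if "j \<in> nbrs E N i" for i j using that unfolding nbrs_def by auto
  have src0: "src D 0 = {D - 1}" and srcS: "src D (Suc t) = {0}" for t unfolding src_def by auto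
  have dh0: "dhat 0 i = dD i" if "i < N" for i
    using init_d[of i "dD i"] that unfolding level_def dD_def by simp
  have updS: "dhat (Suc t) i = Min ((\<lambda>j. dhat t j + 1) ` nbrs E N i)" if "i < N" "i \<noteq> 0" for t i
    using upd_d[OF that(1), of t] that(2) srcS by simp
  have upd0: "dhat (Suc t) 0 = 0" for t using upd_d[OF N0, of t] srcS by simp
  have dh: "\<forall>i<N. (d0 i < t \<longrightarrow> dhat t i = d0 i) \<and> (t \<le> d0 i \<and> dD i < t \<longrightarrow> t \<le> dhat t i \<and> dhat t i \<le> t + 1)
       \<and> (t \<le> d0 i \<and> t \<le> dD i \<longrightarrow> dhat t i = dD i)" for t
  proof (induction t)
    case 0
    then show ?case using dh0 by auto
  next
    case (Suc t)
    have IH1: "dhat t j = d0 j" if "j < N" "d0 j < t" for j using Suc.IH that by blast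
    have IH2: "t \<le> dhat t j \<and> dhat t j \<le> t + 1" if "j < N" "t \<le> d0 j" "dD j < t" for j using Suc.IH that by blast
    have IH3: "dhat t j = dD j" if "j < N" "t \<le> d0 j" "t \<le> dD j" for j using Suc.IH that by blast
    show ?case
    proof (intro allI impI conjI)
      fix i assume i: "i < N"
      {
        assume a: "d0 i < Suc t"
        show "dhat (Suc t) i = d0 i"
        proof (cases "i = 0")
          case True then show ?thesis using upd0 d00 by simp
        next
          case False
          hence pos: "d0 i > 0" using z0 i by fastforce
          obtain j0 where j0: "E i j0" "d0 j0 + 1 = d0 i" using dn0[OF i pos] by blast
          have ne: "nbrs E N i \<noteq> {}" using nbrsI[OF j0(1)] by blast
          have "d0 i \<le> Min ((\<lambda>j. dhat t j + 1) ` nbrs E N i)"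
          proof (rule Min_geI[OF finN ne])
            fix j assume "j \<in> nbrs E N i"
            hence j: "E i j" "j < N" using nbrsD by auto
            have "d0 i \<le> d0 j + 1" using nb0[OF E_sym[OF j(1)]] .
            then show "d0 i \<le> dhat t j + 1"
              using IH1[OF j(2)] IH2[OF j(2)] IH3[OF j(2)] a by (cases "d0 j < t"; cases "dD j < t") auto
          qed
          moreover have "Min ((\<lambda>j. dhat t j + 1) ` nbrs E N i) \<le> d0 i"
            by (rule Min_leI[OF finN nbrsI[OF j0(1)]]) (use IH1 nbrsD(2)[OF nbrsI[OF j0(1)]] j0 a in auto)
          ultimately show ?thesis using updS[OF i False] by simp
        qed
      }
      {
        assume a0: "Suc t \<le> d0 i \<and> dD i < Suc t"
        then have a: "Suc t \<le> d0 i" "dD i < Suc t" by auto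
        have False: "i \<noteq> 0" proof assume "i = 0" with a d00 show False by simp qed
        hence pos: "d0 i > 0" using a by simp
        obtain j0 where j0: "E i j0" "d0 j0 + 1 = d0 i" using dn0[OF i pos] by blast
        have ne: "nbrs E N i \<noteq> {}" using nbrsI[OF j0(1)] by blast
        have "Suc t \<le> Min ((\<lambda>j. dhat t j + 1) ` nbrs E N i)"
        proof (rule Min_geI[OF finN ne])
          fix j assume "j \<in> nbrs E N i"
          hence j: "E i j" "j < N" using nbrsD by auto
          have "d0 i \<le> d0 j + 1" using nb0[OF E_sym[OF j(1)]] .
          then show "Suc t \<le> dhat t j + 1"
            using IH2[OF j(2)] IH3[OF j(2)] a by (cases "dD j < t") auto
        qed
        moreover have "Min ((\<lambda>j. dhat t j + 1) ` nbrs E N i) \<le> Suc t + 1"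
        proof (rule Min_leI[OF finN nbrsI[OF j0(1)]])
          have j: "j0 < N" using E_in_V[OF j0(1)] by simp
          have "dD j0 \<le> dD i + 1" using nbD[OF j0(1)] .
          then show "dhat t j0 + 1 \<le> Suc t + 1"
            using IH2[OF j] IH3[OF j] a j0 by (cases "dD j0 < t") auto
        qed
        ultimately show "Suc t \<le> dhat (Suc t) i" "dhat (Suc t) i \<le> Suc t + 1" using updS[OF i False] by simp_all
      }
      {
        assume a0: "Suc t \<le> d0 i \<and> Suc t \<le> dD i"
        then have a: "Suc t \<le> d0 i" "Suc t \<le> dD i" by auto
        have False: "i \<noteq> 0" proof assume "i = 0" with a d00 show False by simp qed
        have pos: "dD i > 0" using a by simp
        obtain j0 where j0: "E i j0" "dD j0 + 1 = dD i" using dnD[OF i pos] by blast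
        have ne: "nbrs E N i \<noteq> {}" using nbrsI[OF j0(1)] by blast
        have "dD i \<le> Min ((\<lambda>j. dhat t j + 1) ` nbrs E N i)"
        proof (rule Min_geI[OF finN ne])
          fix j assume "j \<in> nbrs E N i"
          hence j: "E i j" "j < N" using nbrsD by auto
          have "d0 i \<le> d0 j + 1" "dD i \<le> dD j + 1" using nb0[OF E_sym[OF j(1)]] nbD[OF E_sym[OF j(1)]] .
          then show "dD i \<le> dhat t j + 1"
            using IH3[OF j(2)] a by auto
        qed
        moreover have "Min ((\<lambda>j. dhat t j + 1) ` nbrs E N i) \<le> dD i"
        proof (rule Min_leI[OF finN nbrsI[OF j0(1)]])
          have j: "j0 < N" using E_in_V[OF j0(1)] by simp
          have "d0 i \<le> d0 j0 + 1" using nb0[OF E_sym[OF j0(1)]] .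
          then show "dhat t j0 + 1 \<le> dD i"
            using IH3[OF j] a j0 by auto
        qed
        ultimately show "dhat (Suc t) i = dD i" using updS[OF i False] by simp
      }
    qed
  qed
  have dhI0: "dhat t i = d0 i" if "i < N" "d0 i < t" for t i using dh[of t] that by blast
  have dhI1: "t \<le> dhat t i \<and> dhat t i \<le> t + 1" if "i < N" "t \<le> d0 i" "dD i < t" for t i using dh[of t] that by blast
  have dhI2: "dhat t i = dD i" if "i < N" "t \<le> d0 i" "t \<le> dD i" for t i using dh[of t] that by blast
  have child: "E j i \<and> j < N \<and> c t j = i \<and> dhat t j = dhat (Suc t) i + 1" if "j \<in> Cset N dhat c t i" for t i j
  proof -
    from that have j: "j < N" "c t j = i" "dhat t j = dhat (Suc t) i + 1" unfolding Cset_def by auto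
    have "j \<notin> src D t"
    proof
      assume js: "j \<in> src D t"
      show False
      proof (cases t)
        case 0
        then have "j = D - 1" using js src0 by simp
        then have "dhat t j = 0" using fp_d[OF ND] src0 0 by simp
        then show False using j by simp
      next
        case (Suc r)
        then have "j = 0" using js srcS by simp
        then have "dhat t j = 0" using upd0 Suc by simp
        then show False using j by simp
      qed
    qed
    then have "c t j \<in> nbrs E N j"
    proof (cases t)
      case 0 then show ?thesis using fp_c[OF j(1)] \<open>j \<notin> src D t\<close> by simp
    next
      case (Suc r) then show ?thesis using upd_c[OF j(1), of r] \<open>j \<notin> src D t\<close> by simp
    qed
    then show ?thesis using j nbrsD by auto
  qed
  have I1a: "a (Suc t) i = 1" if i: "i < N" and a1: "Suc t \<le> d0 i" and a2: "dD i < Suc t" for t i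
  proof -
    have "Cset N dhat c t i = {}"
    proof (rule ccontr)
      assume "Cset N dhat c t i \<noteq> {}"
      then obtain j where jC: "j \<in> Cset N dhat c t i" by blast
      from child[OF jC] have ch: "E j i" "j < N" "c t j = i" "dhat t j = dhat (Suc t) i + 1" by auto
      have lo: "Suc t \<le> dhat (Suc t) i" using dhI1[OF i a1 a2] by blast
      show False
      proof (cases t)
        case 0
        have "j \<noteq> D - 1"
        proof
          assume "j = D - 1"
          then have "dhat 0 j = 0" using fp_d[OF ND] src0 by simp
          then show False using ch 0 by simp
        qed
        then have "dhat 0 (c 0 j) + 1 = dhat 0 j" using fp_c[OF ch(2)] fp_d[OF ch(2)] src0 by simp
        then have "dhat 1 i = dhat 0 i" using ch 0 by simp
        moreover have "dhat 0 i = 0" using dh0[OF i] a2 0 by simp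
        ultimately show False using lo 0 by simp
      next
        case (Suc r)
        have "j \<noteq> 0"
        proof
          assume "j = 0"
          then have "c t j = j" using upd_c[OF N0, of r] srcS Suc by simp
          then have "i = 0" using ch \<open>j = 0\<close> by simp
          then show False using a1 d00 by simp
        qed
        then have "dhat r (c (Suc r) j) + 1 = dhat (Suc r) j" using upd_c[OF ch(2), of r] upd_d[OF ch(2), of r] srcS by simp
        then have eq: "dhat (Suc (Suc r)) i = dhat r i" using ch Suc by simp
        have "dhat r i \<le> Suc r"
        proof (cases "dD i < r")
          case True then show ?thesis using dhI1[OF i _ True] a1 Suc by simp
        next
          case False then show ?thesis using dhI2[OF i] a1 a2 Suc by simp
        qed
        then show False using eq lo Suc by simp
      qed
    qed
    then show ?thesis using upd_a[OF i, of t] by simp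
  qed
  define L where "L l = {i. i < N \<and> dD i = l}" for l
  define K where "K l = card {i. i < N \<and> l \<le> dD i}" for l
  have finL: "finite (L l)" for l unfolding L_def by simp
  have Kstep: "K l = card (L l) + K (Suc l)" for l
  proof -
    have "{i. i < N \<and> l \<le> dD i} = L l \<union> {i. i < N \<and> Suc l \<le> dD i}" unfolding L_def by auto
    moreover have "L l \<inter> {i. i < N \<and> Suc l \<le> dD i} = {}" unfolding L_def by auto
    ultimately show ?thesis unfolding K_def using finL by (simp add: card_Un_disjoint)
  qed
  have KN: "K l \<le> N" for l
  proof -
    have "K l \<le> card {..<N}" unfolding K_def by (rule card_mono) auto
    then show ?thesis by simp
  qed
  have Hstep: "sum (a 0) (L l) \<le> sum (a 0) (L (Suc l)) + card (L l)" for l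
  proof -
    have "sum (a 0) (L l) = (\<Sum>i\<in>L l. (\<Sum>j\<in>{j. j < N \<and> c 0 j = i \<and> dhat 0 j = dhat 0 i + 1}. a 0 j) + 1)"
      by (rule sum.cong) (use fp_a in \<open>auto simp: L_def\<close>)
    also have "\<dots> = (\<Sum>i\<in>L l. \<Sum>j\<in>{j. j < N \<and> c 0 j = i \<and> dhat 0 j = dhat 0 i + 1}. a 0 j) + card (L l)"
      by (subst sum.distrib) simp
    finally have e1: "sum (a 0) (L l) = (\<Sum>i\<in>L l. \<Sum>j\<in>{j. j < N \<and> c 0 j = i \<and> dhat 0 j = dhat 0 i + 1}. a 0 j) + card (L l)" .
    have e2: "(\<Sum>i\<in>L l. \<Sum>j\<in>{j. j < N \<and> c 0 j = i \<and> dhat 0 j = dhat 0 i + 1}. a 0 j) \<le> sum (a 0) (L (Suc l))"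
    proof (rule sum_children[OF finL finL, where f = "c 0"])
      fix i assume "i \<in> L l"
      then show "{j. j < N \<and> c 0 j = i \<and> dhat 0 j = dhat 0 i + 1} \<subseteq> L (Suc l)"
        using dh0 unfolding L_def by auto
    qed auto
    then show ?thesis using e1 by linarith
  qed
  define B where "B = Max (dD ` {..<N})"
  have dDB: "dD i \<le> B" if "i < N" for i unfolding B_def using that by (intro Max_ge) auto
  have Hbound_n: "\<forall>l. B < l + n \<longrightarrow> sum (a 0) (L l) \<le> K l" for n
  proof (induction n)
    case 0
    show ?case
    proof (intro allI impI)
      fix l assume "B < l + 0"
      then have "L l = {}" unfolding L_def using dDB by fastforce
      then show "sum (a 0) (L l) \<le> K l" by simp
    qed
  next
    case (Suc n)
    show ?case
    proof (intro allI impI)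
      fix l assume "B < l + Suc n"
      then have "sum (a 0) (L (Suc l)) \<le> K (Suc l)" using Suc.IH by auto
      then show "sum (a 0) (L l) \<le> K l" using Hstep[of l] Kstep[of l] by simp
    qed
  qed
  have Hbound: "sum (a 0) (L l) \<le> K l" for l using Hbound_n[of "Suc B"] by simp
  define Gs where "Gs t l = {i. i < N \<and> t \<le> d0 i \<and> t \<le> dD i \<and> dD i = l}" for t l
  have finGs: "finite (Gs t l)" for t l unfolding Gs_def by simp
  have Gbound: "\<forall>l. sum (a t) (Gs t l) \<le> K l" for t
  proof (induction t)
    case 0
    have "Gs 0 l = L l" for l unfolding Gs_def L_def by auto
    then show ?case using Hbound by simp
  next
    case (Suc t)
    show ?case
    proof
      fix l
      have "sum (a (Suc t)) (Gs (Suc t) l) = (\<Sum>i\<in>Gs (Suc t) l. (\<Sum>j\<in>Cset N dhat c t i. a t j) + 1)"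
        by (rule sum.cong) (use upd_a in \<open>auto simp: Gs_def\<close>)
      also have "\<dots> = (\<Sum>i\<in>Gs (Suc t) l. \<Sum>j\<in>Cset N dhat c t i. a t j) + card (Gs (Suc t) l)"
        by (subst sum.distrib) simp
      finally have e1: "sum (a (Suc t)) (Gs (Suc t) l) = (\<Sum>i\<in>Gs (Suc t) l. \<Sum>j\<in>Cset N dhat c t i. a t j) + card (Gs (Suc t) l)" .
      have e2: "(\<Sum>i\<in>Gs (Suc t) l. \<Sum>j\<in>Cset N dhat c t i. a t j) \<le> sum (a t) (Gs t (Suc l))"
      proof (rule sum_children[OF finGs finGs, where f = "c t"])
        fix i j assume iG: "i \<in> Gs (Suc t) l" and jC: "j \<in> Cset N dhat c t i"
        from child[OF jC] have ch: "E j i" "j < N" "c t j = i" "dhat t j = dhat (Suc t) i + 1" by auto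
        show "c t j = i" using ch by simp
      next
        fix i assume iG: "i \<in> Gs (Suc t) l"
        show "Cset N dhat c t i \<subseteq> Gs t (Suc l)"
        proof
          fix j assume jC: "j \<in> Cset N dhat c t i"
          from child[OF jC] have ch: "E j i" "j < N" "c t j = i" "dhat t j = dhat (Suc t) i + 1" by auto
          have i: "i < N" "Suc t \<le> d0 i" "Suc t \<le> dD i" "dD i = l" using iG unfolding Gs_def by auto
          have "d0 i \<le> d0 j + 1" "dD i \<le> dD j + 1" using nb0[OF ch(1)] nbD[OF ch(1)] .
          then have jt: "t \<le> d0 j" "t \<le> dD j" using i by auto
          have "dhat t j = dD j" using dhI2[OF ch(2) jt] .
          moreover have "dhat (Suc t) i = l" using dhI2[OF i(1-3)] i(4) by simp
          ultimately show "j \<in> Gs t (Suc l)" using ch jt unfolding Gs_def by simp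
        qed
      qed
      have e3: "card (Gs (Suc t) l) \<le> card (L l)" by (rule card_mono[OF finL]) (auto simp: Gs_def L_def)
      have "sum (a t) (Gs t (Suc l)) \<le> K (Suc l)" using Suc.IH by blast
      then show "sum (a (Suc t)) (Gs (Suc t) l) \<le> K l" using e1 e2 e3 Kstep[of l] by linarith
    qed
  qed
  define S where "S k = {i. i < N \<and> d0 i = k}" for k
  define P where "P t k = card {i. i < N \<and> k \<le> d0 i \<and> d0 i < t}" for t k
  have finS: "finite (S k)" for k unfolding S_def by simp
  have PN: "P t k \<le> N" for t k
  proof -
    have "P t k \<le> card {..<N}" unfolding P_def by (rule card_mono) auto
    then show ?thesis by simp
  qed
  have SP: "card (S k) \<le> P (Suc t) k" if "k < Suc t" for k t
    unfolding S_def P_def by (rule card_mono) (use that in auto)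
  have Abound: "\<forall>k<t. sum (a t) (S k) \<le> P t k + N" for t
  proof (induction t)
    case 0 then show ?case by simp
  next
    case (Suc t)
    show ?case
    proof (intro allI impI)
      fix k assume k: "k < Suc t"
      have "sum (a (Suc t)) (S k) = (\<Sum>i\<in>S k. (\<Sum>j\<in>Cset N dhat c t i. a t j) + 1)"
        by (rule sum.cong) (use upd_a in \<open>auto simp: S_def\<close>)
      also have "\<dots> = (\<Sum>i\<in>S k. \<Sum>j\<in>Cset N dhat c t i. a t j) + card (S k)"
        by (subst sum.distrib) simp
      finally have e1: "sum (a (Suc t)) (S k) = (\<Sum>i\<in>S k. \<Sum>j\<in>Cset N dhat c t i. a t j) + card (S k)" .
      have chS: "E i j \<and> j < N \<and> c t j = i \<and> dhat t j = k + 1 \<and> d0 j \<le> k + 1"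
        if iS: "i \<in> S k" and jC: "j \<in> Cset N dhat c t i" for i j
      proof -
        from child[OF jC] have ch: "E j i" "j < N" "c t j = i" "dhat t j = dhat (Suc t) i + 1" by auto
        have i: "i < N" "d0 i = k" using iS unfolding S_def by auto
        have "dhat (Suc t) i = k" using dhI0[OF i(1)] i(2) k by simp
        moreover have "d0 j \<le> d0 i + 1" using nb0[OF E_sym[OF ch(1)]] .
        ultimately show ?thesis using ch E_sym i by auto
      qed
      show "sum (a (Suc t)) (S k) \<le> P (Suc t) k + N"
      proof (cases "Suc k < t")
        case True
        have e2: "(\<Sum>i\<in>S k. \<Sum>j\<in>Cset N dhat c t i. a t j) \<le> sum (a t) (S (Suc k))"
        proof (rule sum_children[OF finS finS, where f = "c t"])
          fix i j assume "i \<in> S k" "j \<in> Cset N dhat c t i"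
          then show "c t j = i" using chS by blast
        next
          fix i assume iS: "i \<in> S k"
          show "Cset N dhat c t i \<subseteq> S (Suc k)"
          proof
            fix j assume jC: "j \<in> Cset N dhat c t i"
            from chS[OF iS jC] have cj: "j < N" "dhat t j = k + 1" "d0 j \<le> k + 1" by auto
            have "dhat t j = d0 j" using dhI0[OF cj(1)] cj(3) True by simp
            then show "j \<in> S (Suc k)" using cj unfolding S_def by simp
          qed
        qed
        have e3: "sum (a t) (S (Suc k)) \<le> P t (Suc k) + N" using Suc.IH True by blast
        have "card (S k) + P t (Suc k) = card (S k \<union> {i. i < N \<and> Suc k \<le> d0 i \<and> d0 i < t})"
          unfolding P_def by (rule card_Un_disjoint[symmetric]) (auto simp: S_def)
        also have "\<dots> \<le> P (Suc t) k" unfolding P_def by (rule card_mono) (use True in \<open>auto simp: S_def\<close>)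
        finally show ?thesis using e1 e2 e3 by linarith
      next
        case False
        define U1 where "U1 = {i. i < N \<and> t \<le> d0 i \<and> dD i < t}"
        have finU1: "finite U1" unfolding U1_def by simp
        have e2: "(\<Sum>i\<in>S k. \<Sum>j\<in>Cset N dhat c t i. a t j) \<le> sum (a t) (U1 \<union> Gs t (Suc k))"
        proof (rule sum_children[OF finS, where f = "c t"])
          show "finite (U1 \<union> Gs t (Suc k))" using finU1 finGs by simp
        next
          fix i j assume "i \<in> S k" "j \<in> Cset N dhat c t i"
          then show "c t j = i" using chS by blast
        next
          fix i assume iS: "i \<in> S k"
          show "Cset N dhat c t i \<subseteq> U1 \<union> Gs t (Suc k)"
          proof
            fix j assume jC: "j \<in> Cset N dhat c t i"
            from chS[OF iS jC] have cj: "j < N" "dhat t j = k + 1" "d0 j \<le> k + 1" by auto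
            have tj: "t \<le> d0 j"
            proof (rule ccontr)
              assume nt: "\<not> t \<le> d0 j"
              then have "dhat t j = d0 j" using dhI0[OF cj(1)] by simp
              then show False using cj False nt by simp
            qed
            show "j \<in> U1 \<union> Gs t (Suc k)"
            proof (cases "dD j < t")
              case True then show ?thesis using cj tj unfolding U1_def by simp
            next
              case False
              then have "dhat t j = dD j" using dhI2[OF cj(1) tj] by simp
              then show ?thesis using cj tj False unfolding Gs_def by simp
            qed
          qed
        qed
        have disj: "U1 \<inter> Gs t (Suc k) = {}" unfolding U1_def Gs_def by auto
        have e3: "sum (a t) (U1 \<union> Gs t (Suc k)) = sum (a t) U1 + sum (a t) (Gs t (Suc k))"
          by (rule sum.union_disjoint[OF finU1 finGs disj])
        have e4: "sum (a t) U1 = card U1"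
        proof (cases t)
          case 0 then have "U1 = {}" unfolding U1_def by simp
          then show ?thesis by simp
        next
          case (Suc r)
          have "sum (a t) U1 = sum (\<lambda>_. 1) U1"
            by (rule sum.cong) (use I1a Suc in \<open>auto simp: U1_def\<close>)
          then show ?thesis by simp
        qed
        have e5: "card U1 \<le> card {i. i < N \<and> dD i < Suc k}"
          unfolding U1_def by (rule card_mono) (use False in auto)
        have e6: "card {i. i < N \<and> dD i < Suc k} + K (Suc k) = N"
        proof -
          have "card {i. i < N \<and> dD i < Suc k} + K (Suc k) = card ({i. i < N \<and> dD i < Suc k} \<union> {i. i < N \<and> Suc k \<le> dD i})"
            unfolding K_def by (rule card_Un_disjoint[symmetric]) auto
          also have "{i. i < N \<and> dD i < Suc k} \<union> {i. i < N \<and> Suc k \<le> dD i} = {..<N}" by auto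
          finally show ?thesis by simp
        qed
        have e7: "sum (a t) (Gs t (Suc k)) \<le> K (Suc k)" using Gbound by blast
        show ?thesis using e1 e2 e3 e4 e5 e6 e7 SP[OF k] by linarith
      qed
    qed
  qed
  show ?thesis
  proof (intro allI impI conjI ballI)
    fix t :: nat and i assume t: "1 \<le> t"
    {
      assume "i \<in> I0 E N t"
      then have i: "i < N" "d0 i < t" using t unfolding I0_def level_def d0_def by auto
      have "a t i \<le> sum (a t) (S (d0 i))" by (rule member_le_sum) (use i finS in \<open>auto simp: S_def\<close>)
      also have "\<dots> \<le> P t (d0 i) + N" using Abound[of t] i by blast
      finally show "a t i \<le> 2 * N" using PN[of t "d0 i"] by linarith
    }
    {
      assume "i \<in> I1 E N D t"
      then have i: "i < N" "dD i < t" "t \<le> d0 i" using t unfolding I1_def I0_def level_def d0_def dD_def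
        by auto
      obtain r where r: "t = Suc r" using t by (cases t) auto
      show "a t i = 1" using I1a[of i r] i r by simp
    }
    {
      assume "i \<in> I2 E N D t"
      then have i: "i < N" "t \<le> dD i" "t \<le> d0 i" using t unfolding I2_def I1_def I0_def level_def d0_def dD_def
        by auto
      have "a t i \<le> sum (a t) (Gs t (dD i))" by (rule member_le_sum) (use i finGs in \<open>auto simp: Gs_def\<close>)
      also have "\<dots> \<le> K (dD i)" using Gbound by blast
      finally show "a t i \<le> N" using KN[of "dD i"] by linarith
    }
  qed
qed
end
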